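(* Let $\rho\in\{1/2,1\}$, let $s>0$ and $\eta>0$ be real numbers, let $q\in\mathbb{C}$, and let $\epsilon<1$ be real. Define the real cubic polynomial $$f(\gamma) = -\gamma^3\eta s^2 - \gamma^2\big[(1-\epsilon+\rho)s^2 + 2\eta s\big] + \gamma\big[2(\epsilon-1)s - s\rho + \rho|q|^2 - \eta\big] + (\epsilon-1).$$ If $f$ has positive roots, then it has exactly two of them (counted with multiplicity).
   Context: The polynomial $f$ satisfies $f(\gamma)=\gamma(1+\gamma s)^2\ell'(\gamma)$, where $\ell(\gamma) = -\rho\log(1+\gamma s) + \rho|q|^2/(\gamma^{-1}+s) + (\epsilon-1)\log\gamma - \eta\gamma$ for $\gamma>0$. Here $\rho=1/2$ corresponds to a real and $\rho=1$ to a complex signal model, $\epsilon$ is a gamma shape parameter and $\eta>0$ a gamma rate parameter. *)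

theory Defs
  imports "HOL-Analysis.Analysis" "HOL-Computational_Algebra.Polynomial"
begin

definition f_poly :: "real \<Rightarrow> real \<Rightarrow> real \<Rightarrow> complex \<Rightarrow> real \<Rightarrow> real poly" where
  "f_poly \<rho> s \<eta> q \<epsilon> =
     [: \<epsilon> - 1,
        2 * (\<epsilon> - 1) * s - s * \<rho> + \<rho> * (cmod q)^2 - \<eta>,
        - ((1 - \<epsilon> + \<rho>) * s^2 + 2 * \<eta> * s),
        - \<eta> * s^2 :]"

end

theory Submission
  imports Defs
begin

lemma order_lin: "order a [:-b, 1:] = (if a = b then 1 else (0::nat))" for a b :: real
proof (cases "a = b")
  case True
  then show ?thesis using order_power_n_n[of a 1] by simp
next
  case False
  have "order a [:-b, 1:] = 0" by (rule order_0I) (use False in simp)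
  then show ?thesis using False by simp
qed

lemma count3:
  fixes r r' t c :: real
  assumes "c \<noteq> 0" "r > 0" "r' > 0" "t < 0"
  defines "p \<equiv> smult c ([:-r,1:] * [:-r',1:] * [:-t,1:])"
  shows "(\<Sum>\<gamma> \<in> {\<gamma>. \<gamma> > 0 \<and> poly p \<gamma> = 0}. order \<gamma> p) = 2"
proof -
  have nz: "[:-r,1:] * [:-r',1:] * [:-t,1:] \<noteq> 0" by simp
  have ord: "order a p = (if a = r then 1 else 0) + (if a = r' then 1 else 0) + (if a = t then 1 else 0)" for a
    unfolding p_def using assms(1) nz
    by (simp add: order_smult order_mult order_lin del: mult_pCons_left mult_pCons_right)
  have pv: "poly p x = c * ((x - r) * (x - r') * (x - t))" for x
    unfolding p_def by (simp only: poly_smult poly_mult) simp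
  have S: "{\<gamma>. \<gamma> > 0 \<and> poly p \<gamma> = 0} = {r, r'}"
    using assms(1-4) by (auto simp: pv)
  show ?thesis
  proof (cases "r = r'")
    case True
    then show ?thesis using S ord assms by simp
  next
    case False
    then show ?thesis using S ord assms by simp
  qed
qed

theorem lemma1:
  fixes \<rho> s \<eta> \<epsilon> :: real and q :: complex
  assumes "\<rho> \<in> {1/2, 1}" and "s > 0" and "\<eta> > 0" and "\<epsilon> < 1"
    and "\<exists>\<gamma>>0. poly (f_poly \<rho> s \<eta> q \<epsilon>) \<gamma> = 0"
  shows "(\<Sum>\<gamma> \<in> {\<gamma>. \<gamma> > 0 \<and> poly (f_poly \<rho> s \<eta> q \<epsilon>) \<gamma> = 0}.
            order \<gamma> (f_poly \<rho> s \<eta> q \<epsilon>)) = 2"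
proof -
  obtain r where r: "r > 0" "poly (f_poly \<rho> s \<eta> q \<epsilon>) r = 0" using assms(5) by blast
  define a0 where "a0 = \<epsilon> - 1"
  define a1 where "a1 = 2 * (\<epsilon> - 1) * s - s * \<rho> + \<rho> * (cmod q)^2 - \<eta>"
  define a2 where "a2 = - ((1 - \<epsilon> + \<rho>) * s^2 + 2 * \<eta> * s)"
  define a3 where "a3 = - \<eta> * s^2"
  have fp: "f_poly \<rho> s \<eta> q \<epsilon> = [:a0, a1, a2, a3:]"
    unfolding f_poly_def a0_def a1_def a2_def a3_def by simp
  have a3n: "a3 < 0" unfolding a3_def using assms by simp
  have a0n: "a0 < 0" unfolding a0_def using assms by simp
  define c2 where "c2 = a3"
  define c1 where "c1 = a2 + r * a3"
  define c0 where "c0 = a1 + r * c1"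
  have root: "a0 + r * (a1 + r * (a2 + r * a3)) = 0" using r(2) fp by simp
  have c0eq: "a0 + r * c0 = 0" using root unfolding c0_def c1_def by (simp add: algebra_simps)
  have c0p: "c0 > 0"
  proof -
    have "r * c0 > 0" using c0eq a0n by linarith
    then show ?thesis using r(1) by (simp add: zero_less_mult_iff)
  qed
  define D where "D = c1^2 - 4 * c2 * c0"
  have Dp: "D > 0" unfolding D_def c2_def using a3n c0p
    by (smt (verit) mult_neg_pos zero_le_power2)
  define u where "u = (- c1 - sqrt D) / (2 * c2)"
  define v where "v = (- c1 + sqrt D) / (2 * c2)"
  have sq: "sqrt D * sqrt D = D" using Dp by simp
  have c2nz: "c2 \<noteq> 0" using a3n c2_def by simp
  have sumuv: "u + v = - c1 / c2" unfolding u_def v_def using c2nz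
    by (simp add: field_simps)
  have produv: "u * v = c0 / c2"
  proof -
    have "u * v = ((-c1)^2 - sqrt D * sqrt D) / (4 * c2^2)"
      unfolding u_def v_def using c2nz by (simp add: field_simps power2_eq_square)
    also have "\<dots> = c0 / c2" using sq c2nz unfolding D_def
      by (simp add: field_simps power2_eq_square)
    finally show ?thesis .
  qed
  have uvneg: "u * v < 0" using produv c0p a3n c2_def by (simp add: divide_pos_neg)
  have factor: "f_poly \<rho> s \<eta> q \<epsilon> = smult c2 ([:-r,1:] * [:-u,1:] * [:-v,1:])"
  proof -
    have "poly (f_poly \<rho> s \<eta> q \<epsilon>) x = poly (smult c2 ([:-r,1:] * [:-u,1:] * [:-v,1:])) x" for x
    proof -
      have e1: "c2 * (u + v) = - c1" using sumuv c2nz by (simp add: field_simps)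
      have e2: "c2 * (u * v) = c0" using produv c2nz by (simp add: field_simps)
      have "poly (smult c2 ([:-r,1:] * [:-u,1:] * [:-v,1:])) x
            = (x - r) * (c2 * x^2 - c2 * (u + v) * x + c2 * (u * v))"
        by (simp add: algebra_simps power2_eq_square)
      also have "\<dots> = (x - r) * (c2 * x^2 + c1 * x + c0)"
        using e1 e2 by (simp add: algebra_simps)
      also have "\<dots> = a0 + x * (a1 + x * (a2 + x * a3))"
        using c0eq unfolding c2_def c1_def c0_def
        by (simp add: algebra_simps power2_eq_square power3_eq_cube)
      finally show ?thesis using fp by simp
    qed
    then show ?thesis using poly_eq_poly_eq_iff by blast
  qed
  show ?thesis
  proof (cases "u > 0")
    case True
    then have "v < 0" using uvneg by (simp add: mult_less_0_iff)
    then show ?thesis unfolding factor using count3[of c2 r u v] True c2nz r(1) by simp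
  next
    case False
    then have "v > 0" "u < 0" using uvneg by (auto simp: mult_less_0_iff)
    moreover have "[:-r,1:] * [:-u,1:] * [:-v,1:] = [:-r,1:] * [:-v,1:] * [:-u,1:]"
      by (simp only: mult.assoc mult.commute[of "[:-u,1:]"])
    ultimately show ?thesis unfolding factor using count3[of c2 r v u] c2nz r(1)
      by (simp only:) simp
  qed
qed

end
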